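(* Let $G$ be a graph on $[n]$ and let $e$ and $f$ be two crossing edges of $G$ that are crossing closed. Then exactly one of the following holds. (1) There is an edge of $G$ joining a vertex of $e$ to a vertex of $f$. In this case $J(e,f)=G[e\cup f]$, the induced subgraph on the four endpoints of $e$ and $f$ (so $J(e,f)$ is a subgraph of $K_4$). (2) There is no edge of $G$ joining a vertex of $e$ to a vertex of $f$. In this case, writing $e=vv'$ and $f=ww'$ suitably, there are $k\ge 0$ and distinct vertices $x_0,\dots,x_k$ not on $e$ or $f$ such that $J(e,f)$ has vertex set $\{v,v',x_0,\dots,x_k,w',w\}$ and its edges are exactly $vv'$, $ww'$, the path edges $x_0x_1,x_1x_2,\dots,x_{k-1}x_k$, at least one and at most two of the edges $vx_0,v'x_0$, and at least one and at most two of the edges $wx_k,w'x_k$ (with no other edges). Moreover, every vertex of $J(e,f)$ not on $e$ or $f$ (i.e. each $x_i$) is a cut vertex of $G$ that separates $e$ and $f$.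
   Context: All graphs are finite simple graphs with vertex set $[n]=\{1,\dots,n\}$; edges are written $ij$ with $i<j$. Two edges $a_1a_2$ and $b_1b_2$ cross if $a_1<b_1<a_2<b_2$ or $b_1<a_1<b_2<a_2$. For a set $S$ of vertices, $G[S]$ is the induced subgraph of $G$ on $S$; for a set of edges $E$, $G[E]$ is the induced subgraph on the set of endpoints of the edges in $E$. Two crossing edges $e,f$ of $G$ are crossing closed if among all induced connected subgraphs of $G$ containing both $e$ and $f$ there is a unique one that is minimal with respect to containment; this subgraph is denoted $J(e,f)$. A vertex $x$ separates $e$ and $f$ if $e$ and $f$ lie in different connected components of $G\setminus x$. *)

theory Defs
  imports Main
begin

text \<open>A graph on [n] is given by its edge set E of pairs (i,j) with 1 <= i < j <= n;
  the vertex set is always {1..n}.\<close>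

definition graph_on :: "nat \<Rightarrow> (nat \<times> nat) set \<Rightarrow> bool" where
  "graph_on n E \<longleftrightarrow> E \<subseteq> {(i,j). 1 \<le> i \<and> i < j \<and> j \<le> n}"

definition ends :: "nat \<times> nat \<Rightarrow> nat set" where
  "ends e = {fst e, snd e}"

definition adj :: "(nat \<times> nat) set \<Rightarrow> nat \<Rightarrow> nat \<Rightarrow> bool" where
  "adj E u v \<longleftrightarrow> (u, v) \<in> E \<or> (v, u) \<in> E"

definition crossing :: "nat \<times> nat \<Rightarrow> nat \<times> nat \<Rightarrow> bool" where
  "crossing e f \<longleftrightarrow>
     (fst e < fst f \<and> fst f < snd e \<and> snd e < snd f) \<or>
     (fst f < fst e \<and> fst e < snd f \<and> snd f < snd e)"

definition adj_in :: "(nat \<times> nat) set \<Rightarrow> nat set \<Rightarrow> (nat \<times> nat) set" where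
  "adj_in E S = {(u, v). u \<in> S \<and> v \<in> S \<and> adj E u v}"

definition connected_in :: "(nat \<times> nat) set \<Rightarrow> nat set \<Rightarrow> nat \<Rightarrow> nat \<Rightarrow> bool" where
  "connected_in E S u v \<longleftrightarrow> u \<in> S \<and> v \<in> S \<and> (u, v) \<in> (adj_in E S)\<^sup>*"

definition induced_connected :: "(nat \<times> nat) set \<Rightarrow> nat set \<Rightarrow> bool" where
  "induced_connected E S \<longleftrightarrow> S \<noteq> {} \<and> (\<forall>u\<in>S. \<forall>v\<in>S. connected_in E S u v)"

definition conn_containing :: "nat \<Rightarrow> (nat \<times> nat) set \<Rightarrow> nat \<times> nat \<Rightarrow> nat \<times> nat \<Rightarrow> nat set \<Rightarrow> bool" where
  "conn_containing n E e f S \<longleftrightarrow>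
     S \<subseteq> {1..n} \<and> ends e \<union> ends f \<subseteq> S \<and> induced_connected E S"

definition minimal_conn :: "nat \<Rightarrow> (nat \<times> nat) set \<Rightarrow> nat \<times> nat \<Rightarrow> nat \<times> nat \<Rightarrow> nat set \<Rightarrow> bool" where
  "minimal_conn n E e f S \<longleftrightarrow>
     conn_containing n E e f S \<and> (\<forall>T. conn_containing n E e f T \<and> T \<subseteq> S \<longrightarrow> T = S)"

definition crossing_closed :: "nat \<Rightarrow> (nat \<times> nat) set \<Rightarrow> nat \<times> nat \<Rightarrow> nat \<times> nat \<Rightarrow> bool" where
  "crossing_closed n E e f \<longleftrightarrow> crossing e f \<and> (\<exists>!S. minimal_conn n E e f S)"

text \<open>Vertex set of J(e,f); J(e,f) itself is the induced subgraph G[J_set n E e f].\<close>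
definition J_set :: "nat \<Rightarrow> (nat \<times> nat) set \<Rightarrow> nat \<times> nat \<Rightarrow> nat \<times> nat \<Rightarrow> nat set" where
  "J_set n E e f = (THE S. minimal_conn n E e f S)"

definition induced_edges :: "(nat \<times> nat) set \<Rightarrow> nat set \<Rightarrow> nat set set" where
  "induced_edges E S = {{a, b} | a b. (a, b) \<in> E \<and> a \<in> S \<and> b \<in> S}"

definition separates :: "nat \<Rightarrow> (nat \<times> nat) set \<Rightarrow> nat \<Rightarrow> nat \<times> nat \<Rightarrow> nat \<times> nat \<Rightarrow> bool" where
  "separates n E x e f \<longleftrightarrow>
     x \<notin> ends e \<and> x \<notin> ends f \<and>
     (\<forall>a\<in>ends e. \<forall>b\<in>ends f. \<not> connected_in E ({1..n} - {x}) a b)"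

definition cut_vertex :: "nat \<Rightarrow> (nat \<times> nat) set \<Rightarrow> nat \<Rightarrow> bool" where
  "cut_vertex n E x \<longleftrightarrow> x \<in> {1..n} \<and>
     (\<exists>u v. u \<noteq> x \<and> v \<noteq> x \<and> connected_in E {1..n} u v \<and>
            \<not> connected_in E ({1..n} - {x}) u v)"

end

theory Submission
  imports Defs
begin

definition walkE :: "(nat \<times> nat) set \<Rightarrow> nat list \<Rightarrow> bool" where
  "walkE E p \<longleftrightarrow> (\<forall>i. Suc i < length p \<longrightarrow> adj E (p!i) (p!Suc i))"

definition ew :: "nat \<Rightarrow> (nat \<times> nat) set \<Rightarrow> nat \<times> nat \<Rightarrow> nat \<times> nat \<Rightarrow> nat list \<Rightarrow> bool" where
  "ew n E e f p \<longleftrightarrow> p \<noteq> [] \<and> p!0 \<in> ends e \<and> p!(length p - 1) \<in> ends f \<and> set p \<subseteq> {1..n} \<and> walkE E p"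

lemma adj_sym: "adj E u v = adj E v u" by (auto simp: adj_def)

lemma ends_adj: "e \<in> E \<Longrightarrow> a \<in> ends e \<Longrightarrow> b \<in> ends e \<Longrightarrow> a \<noteq> b \<Longrightarrow> adj E a b"
  unfolding ends_def adj_def by auto

lemma adj_irrefl: "graph_on n E \<Longrightarrow> \<not> adj E u u"
  by (auto simp: adj_def graph_on_def)

lemma adj_in_sym: "(a,b) \<in> adj_in E S \<Longrightarrow> (b,a) \<in> adj_in E S"
  by (auto simp: adj_in_def adj_def)

lemma rtrancl_sym: "(a,b) \<in> (adj_in E S)\<^sup>* \<Longrightarrow> (b,a) \<in> (adj_in E S)\<^sup>*"
proof (induction rule: rtrancl_induct)
  case base then show ?case by simp
next
  case (step y z) then show ?case
    by (meson adj_in_sym converse_rtrancl_into_rtrancl)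
qed

lemma walk_conn:
  assumes "walkE E p" "set p \<subseteq> S" "i < length p"
  shows "(p!0, p!i) \<in> (adj_in E S)\<^sup>*"
  using assms(3)
proof (induction i)
  case 0 then show ?case by simp
next
  case (Suc i)
  have "(p!i, p!Suc i) \<in> adj_in E S"
    using assms(1,2) Suc.prems unfolding walkE_def adj_in_def
    by (auto dest: nth_mem)
  with Suc show ?case by (meson Suc_lessD rtrancl_into_rtrancl)
qed

lemma conn_walk:
  assumes "(a,b) \<in> (adj_in E S)\<^sup>*" "a \<in> S"
  shows "\<exists>p. p \<noteq> [] \<and> p!0 = a \<and> p!(length p - 1) = b \<and> set p \<subseteq> S \<and> walkE E p"
  using assms(1)
proof (induction rule: rtrancl_induct)
  case base then show ?case using assms(2) by (intro exI[of _ "[a]"]) (auto simp: walkE_def)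
next
  case (step y z)
  then obtain p where p: "p \<noteq> []" "p!0 = a" "p!(length p - 1) = y" "set p \<subseteq> S" "walkE E p" by blast
  have z: "z \<in> S" "adj E y z" using step(2) by (auto simp: adj_in_def)
  have "walkE E (p @ [z])"
    unfolding walkE_def
  proof (intro allI impI)
    fix i assume i: "Suc i < length (p @ [z])"
    show "adj E ((p @ [z]) ! i) ((p @ [z]) ! Suc i)"
    proof (cases "Suc i < length p")
      case True then show ?thesis using p(5) by (simp add: nth_append walkE_def)
    next
      case False
      then have "Suc i = length p" using i by simp
      then have "i = length p - 1" by simp
      then show ?thesis using z p(3) \<open>Suc i = length p\<close> by (simp add: nth_append)
    qed
  qed
  then show ?case using p z by (intro exI[of _ "p @ [z]"]) (auto simp: nth_append)
qed

lemma conn_from_walk: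
  assumes G: "graph_on n E" and e: "e \<in> E" and f: "f \<in> E" and p: "ew n E e f p"
  shows "conn_containing n E e f (ends e \<union> ends f \<union> set p)"
proof -
  let ?S = "ends e \<union> ends f \<union> set p"
  have eS: "ends e \<subseteq> {1..n}" "ends f \<subseteq> {1..n}"
    using G e f by (auto simp: graph_on_def ends_def)
  have ne: "p \<noteq> []" and p0: "p!0 \<in> ends e" and pl: "p!(length p - 1) \<in> ends f"
    and pS: "set p \<subseteq> {1..n}" and pw: "walkE E p" using p unfolding ew_def by blast+
  have inS: "set p \<subseteq> ?S" by auto
  have c0: "(p!0, x) \<in> (adj_in E ?S)\<^sup>*" if xS: "x \<in> ?S" for x
  proof -
    have A: "(p!0, p!i) \<in> (adj_in E ?S)\<^sup>*" if "i < length p" for i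
      using walk_conn[OF pw inS that] .
    show ?thesis
    proof -
      consider "x \<in> set p" | "x \<in> ends e" | "x \<in> ends f" using xS by blast
      then show ?thesis
      proof cases
        case 1
        then obtain i where "i < length p" "x = p!i" by (auto simp: in_set_conv_nth)
        then show ?thesis using A by simp
      next
        case 2
        show ?thesis
        proof (cases "x = p!0")
          case True then show ?thesis by simp
        next
          case False
          then have "(p!0, x) \<in> adj_in E ?S" using 2 p0 ends_adj[OF e, of "p!0" x] unfolding adj_in_def
            by blast
          then show ?thesis by (rule r_into_rtrancl)
        qed
      next
        case 3
        have L: "(p!0, p!(length p - 1)) \<in> (adj_in E ?S)\<^sup>*" using A ne by simp
        show ?thesis
        proof (cases "x = p!(length p - 1)")
          case True then show ?thesis using L by simp
        next
          case False
          then have "(p!(length p - 1), x) \<in> adj_in E ?S" using 3 pl ends_adj[OF f, of "p!(length p - 1)" x] unfolding adj_in_def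
            by blast
          then show ?thesis using L by (rule rtrancl_into_rtrancl[rotated])
        qed
      qed
    qed
  qed
  have p0S: "p!0 \<in> ?S" using p0 by blast
  show ?thesis
    unfolding conn_containing_def induced_connected_def connected_in_def
  proof (intro conjI ballI)
    show "?S \<subseteq> {1..n}" using eS pS by blast
    show "ends e \<union> ends f \<subseteq> ?S" by (rule Un_upper1)
    show "?S \<noteq> {}" using p0S by (auto simp del: Un_iff)
    fix u v assume u: "u \<in> ?S" and v: "v \<in> ?S"
    show "u \<in> ?S" "v \<in> ?S" using u v by auto
    show "(u, v) \<in> (adj_in E ?S)\<^sup>*"
      using rtrancl_trans[OF rtrancl_sym[OF c0[OF u]] c0[OF v]] .
  qed
qed

lemma J_min:
  assumes "crossing_closed n E e f"
  shows "minimal_conn n E e f (J_set n E e f)"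
  using assms unfolding crossing_closed_def J_set_def by (metis theI')

lemma J_sub:
  assumes cc: "crossing_closed n E e f" and T: "conn_containing n E e f T"
  shows "J_set n E e f \<subseteq> T"
proof -
  let ?P = "\<lambda>S. conn_containing n E e f S \<and> S \<subseteq> T"
  obtain M where M: "?P M" "\<forall>S. ?P S \<longrightarrow> card M \<le> card S"
    using ex_has_least_nat[of ?P T card] T by blast
  have finM: "finite M" using M(1) unfolding conn_containing_def by (meson finite_atLeastAtMost finite_subset)
  have "minimal_conn n E e f M"
    unfolding minimal_conn_def
  proof (intro conjI allI impI)
    show "conn_containing n E e f M" using M by blast
    fix S assume S: "conn_containing n E e f S \<and> S \<subseteq> M"
    then have "card M \<le> card S" using M by blast
    then show "S = M" using S finM by (meson card_seteq)
  qed
  then have "M = J_set n E e f"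
    using cc unfolding crossing_closed_def J_set_def by (metis the_equality)
  then show ?thesis using M by blast
qed


lemma ew_iff: "ew n E e f q \<longleftrightarrow> q \<noteq> [] \<and> hd q \<in> ends e \<and> last q \<in> ends f \<and> set q \<subseteq> {1..n} \<and> walkE E q"
  unfolding ew_def by (auto simp: hd_conv_nth last_conv_nth)

lemma walk_app: "walkE E xs \<Longrightarrow> walkE E ys \<Longrightarrow> xs \<noteq> [] \<Longrightarrow> ys \<noteq> [] \<Longrightarrow> adj E (last xs) (hd ys) \<Longrightarrow> walkE E (xs @ ys)"
  unfolding walkE_def
proof (intro allI impI)
  fix i assume wx: "\<forall>i. Suc i < length xs \<longrightarrow> adj E (xs ! i) (xs ! Suc i)"
    and wy: "\<forall>i. Suc i < length ys \<longrightarrow> adj E (ys ! i) (ys ! Suc i)"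
    and ne: "xs \<noteq> []" "ys \<noteq> []" and a: "adj E (last xs) (hd ys)" and i: "Suc i < length (xs @ ys)"
  consider "Suc i < length xs" | "Suc i = length xs" | "Suc i > length xs" by linarith
  then show "adj E ((xs @ ys) ! i) ((xs @ ys) ! Suc i)"
  proof cases
    case 1 then show ?thesis using wx by (simp add: nth_append)
  next
    case 2 then have "i = length xs - 1" by simp
    then show ?thesis using a ne 2 by (simp add: nth_append last_conv_nth hd_conv_nth)
  next
    case 3
    then have "Suc (i - length xs) < length ys" "Suc i - length xs = Suc (i - length xs)" using i by auto
    then show ?thesis using wy 3 by (simp add: nth_append)
  qed
qed

lemma walk_take: "walkE E xs \<Longrightarrow> walkE E (take k xs)"
  unfolding walkE_def by auto

lemma walk_drop: "walkE E xs \<Longrightarrow> walkE E (drop k xs)"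
  unfolding walkE_def by (auto simp: add.commute)

lemma walk_single: "walkE E [u]" unfolding walkE_def by auto

lemma reach_walk_in:
  assumes "connected_in E S a b"
  shows "\<exists>q. q \<noteq> [] \<and> hd q = a \<and> last q = b \<and> set q \<subseteq> S \<and> walkE E q"
proof -
  from assms have "(a,b) \<in> (adj_in E S)\<^sup>*" "a \<in> S" by (auto simp: connected_in_def)
  from conn_walk[OF this] show ?thesis by (metis hd_conv_nth last_conv_nth)
qed

context
  fixes n E e f p
  assumes G: "graph_on n E" and e: "e \<in> E" and f: "f \<in> E"
    and p: "ew n E e f p" and pmin: "\<And>q. ew n E e f q \<Longrightarrow> length p \<le> length q"
begin

lemma p_props: "p \<noteq> []" "hd p \<in> ends e" "last p \<in> ends f" "set p \<subseteq> {1..n}" "walkE E p"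
  using p unfolding ew_iff by auto

lemma ends_in: "ends e \<subseteq> {1..n}" "ends f \<subseteq> {1..n}"
  using G e f by (auto simp: graph_on_def ends_def)

lemma L1: assumes "Suc i < j" "j < length p" shows "\<not> adj E (p!i) (p!j)"
proof
  assume a: "adj E (p!i) (p!j)"
  let ?q = "take (Suc i) p @ drop j p"
  have t: "take (Suc i) p = take i p @ [p!i]" using assms by (simp add: take_Suc_conv_app_nth)
  have d: "hd (drop j p) = p!j" using assms by (simp add: hd_drop_conv_nth)
  have ne: "drop j p \<noteq> []" using assms by simp
  have "walkE E ?q"
    by (rule walk_app[OF walk_take[OF p_props(5)] walk_drop[OF p_props(5)]]) (use a t d ne in auto)
  moreover have "hd ?q = hd p" using p_props(1) by (cases p) auto
  moreover have "last ?q = last p" using ne by simp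
  moreover have "set ?q \<subseteq> set p" using set_take_subset set_drop_subset by fastforce
  ultimately have "ew n E e f ?q" using p_props unfolding ew_iff by auto
  then have "length p \<le> length ?q" by (rule pmin)
  then show False using assms by simp
qed

lemma L2: assumes "u \<in> ends e" "2 \<le> j" "j < length p" shows "\<not> adj E u (p!j)"
proof
  assume a: "adj E u (p!j)"
  let ?q = "[u] @ drop j p"
  have d: "hd (drop j p) = p!j" using assms by (simp add: hd_drop_conv_nth)
  have ne: "drop j p \<noteq> []" using assms by simp
  have "walkE E ?q"
    by (rule walk_app) (use a d ne p_props(5) walk_single walk_drop in auto)
  moreover have "last ?q = last p" using ne by simp
  moreover have "set ?q \<subseteq> set p \<union> {u}" using set_drop_subset by fastforce
  ultimately have "ew n E e f ?q" using p_props assms ends_in unfolding ew_iff by auto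
  then have "length p \<le> length ?q" by (rule pmin)
  then show False using assms by simp
qed

lemma L2b: assumes "1 \<le> j" "j < length p" shows "p!j \<notin> ends e"
proof
  assume a: "p!j \<in> ends e"
  let ?q = "drop j p"
  have d: "hd (drop j p) = p!j" using assms by (simp add: hd_drop_conv_nth)
  have ne: "drop j p \<noteq> []" using assms by simp
  have "walkE E ?q" using p_props(5) walk_drop by auto
  moreover have "last ?q = last p" using ne by simp
  moreover have "set ?q \<subseteq> set p" using set_drop_subset by fastforce
  ultimately have "ew n E e f ?q" using p_props assms a d ne unfolding ew_iff by auto
  then have "length p \<le> length ?q" by (rule pmin)
  then show False using assms by simp
qed

lemma L3: assumes "u \<in> ends f" "j + 2 < length p" shows "\<not> adj E (p!j) u"
proof
  assume a: "adj E (p!j) u"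
  let ?q = "take (Suc j) p @ [u]"
  have t: "take (Suc j) p = take j p @ [p!j]" using assms by (simp add: take_Suc_conv_app_nth)
  have "walkE E ?q"
    by (rule walk_app[OF walk_take[OF p_props(5)] walk_single]) (use a t in auto)
  moreover have "hd ?q = hd p" using p_props(1) by (cases p) auto
  moreover have "set ?q \<subseteq> set p \<union> {u}" using set_take_subset by fastforce
  ultimately have "ew n E e f ?q" using p_props assms ends_in unfolding ew_iff by auto
  then have "length p \<le> length ?q" by (rule pmin)
  then show False using assms by simp
qed

lemma L3b: assumes "j + 1 < length p" shows "p!j \<notin> ends f"
proof
  assume a: "p!j \<in> ends f"
  let ?q = "take (Suc j) p"
  have t: "take (Suc j) p = take j p @ [p!j]" using assms by (simp add: take_Suc_conv_app_nth)
  have "walkE E ?q" using p_props(5) walk_take by auto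
  moreover have "hd ?q = hd p" using p_props(1) by (cases p) auto
  moreover have "set ?q \<subseteq> set p" using set_take_subset by fastforce
  moreover have "j < length p" using assms by simp
  then have "p!j \<in> {1..n}" using p_props(4) nth_mem[of j p] by blast
  ultimately have "ew n E e f ?q" using p_props assms a t unfolding ew_iff by auto
  then have "length p \<le> length ?q" by (rule pmin)
  then show False using assms by simp
qed


lemma part2:
  assumes cc: "crossing_closed n E e f"
    and nc: "\<not> (\<exists>a\<in>ends e. \<exists>b\<in>ends f. adj E a b)"
    and disj: "ends e \<inter> ends f = {}"
  shows "\<exists>v v' w w' (k::nat) xs A B.
               ends e = {v, v'} \<and> ends f = {w, w'} \<and>
               length xs = k + 1 \<and> distinct xs \<and>
               set xs \<inter> (ends e \<union> ends f) = {} \<and>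
               J_set n E e f = {v, v'} \<union> set xs \<union> {w', w} \<and>
               A \<noteq> {} \<and> A \<subseteq> {{v, xs ! 0}, {v', xs ! 0}} \<and>
               B \<noteq> {} \<and> B \<subseteq> {{w, xs ! k}, {w', xs ! k}} \<and>
               induced_edges E (J_set n E e f) =
                 {{v, v'}, {w, w'}} \<union> {{xs ! i, xs ! (i + 1)} | i. i < k} \<union> A \<union> B \<and>
               (\<forall>i\<le>k. cut_vertex n E (xs ! i) \<and> separates n E (xs ! i) e f)"
proof -
  let ?J = "J_set n E e f"
  let ?X = "ends e \<union> ends f"
  define m where "m = length p"
  have Jmin: "minimal_conn n E e f ?J" by (rule J_min[OF cc])
  then have Jcc: "conn_containing n E e f ?J" by (simp add: minimal_conn_def)
  then have XJ: "?X \<subseteq> ?J" and JS: "?J \<subseteq> {1..n}" and Jcon: "induced_connected E ?J"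
    by (auto simp: conn_containing_def)
  have p0: "p!0 \<in> ends e" using p_props(1,2) by (simp add: hd_conv_nth)
  have pl: "p!(m-1) \<in> ends f" using p_props(1,3) by (simp add: last_conv_nth m_def)
  have m0: "m \<noteq> 0" using p_props(1) m_def by simp
  have adjp: "adj E (p!i) (p!Suc i)" if "Suc i < m" for i
    using p_props(5) that unfolding walkE_def m_def by blast
  have m3: "3 \<le> m"
  proof (rule ccontr)
    assume "\<not> 3 \<le> m"
    then consider "m = 1" | "m = 2" using m0 by linarith
    then show False
    proof cases
      case 1 then show False using p0 pl disj by auto
    next
      case 2 then show False using p0 pl nc adjp[of 0] by auto
    qed
  qed
  define k where "k = m - 3"
  have mk: "m = k + 3" using m3 k_def by simp
  define xs where "xs = map (\<lambda>i. p!Suc i) [0..<Suc k]"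
  have xs_nth: "xs!i = p!Suc i" if "i \<le> k" for i
    using that unfolding xs_def by (simp del: upt_Suc add: nth_map)
  have len: "length xs = k + 1" unfolding xs_def by simp
  have setxs: "set xs = {p!Suc i | i. i \<le> k}" unfolding xs_def
    by (auto simp: image_def less_Suc_eq_le simp del: upt_Suc)
  have pl': "p!(k+2) \<in> ends f" using pl mk by simp
  have setp: "set p = {p!0, p!(k+2)} \<union> set xs"
  proof
    show "set p \<subseteq> {p!0, p!(k+2)} \<union> set xs"
    proof
      fix x assume "x \<in> set p"
      then obtain i where i: "i < m" "x = p!i" by (auto simp: in_set_conv_nth m_def)
      show "x \<in> {p!0, p!(k+2)} \<union> set xs"
      proof (cases i)
        case 0 then show ?thesis using i by simp
      next
        case (Suc i')
        show ?thesis
        proof (cases "i' \<le> k")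
          case True then show ?thesis using i Suc setxs by auto
        next
          case False then have "i = k + 2" using i Suc mk by simp
          then show ?thesis using i by simp
        qed
      qed
    qed
    show "{p!0, p!(k+2)} \<union> set xs \<subseteq> set p"
      using setxs mk m_def by auto
  qed
  have xe: "p!Suc i \<notin> ends e" if "i \<le> k" for i using L2b[of "Suc i"] that mk m_def by simp
  have xf: "p!Suc i \<notin> ends f" if "i \<le> k" for i using L3b[of "Suc i"] that mk m_def by simp
  have xsX: "set xs \<inter> ?X = {}" using setxs xe xf by auto
  have irr: "\<And>u. \<not> adj E u u" using adj_irrefl[OF G] by blast
  have dist: "p!Suc i \<noteq> p!Suc j" if "i < j" "j \<le> k" for i j
  proof
    assume eq: "p!Suc i = p!Suc j"
    show False
    proof (cases "j = Suc i")
      case True then show False using eq adjp[of "Suc i"] irr that mk by auto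
    next
      case False
      have "adj E (p!Suc j) (p!Suc (Suc j))" using adjp[of "Suc j"] that mk by simp
      then have "adj E (p!Suc i) (p!Suc (Suc j))" using eq by simp
      moreover have "\<not> adj E (p!Suc i) (p!Suc (Suc j))"
        using L1[of "Suc i" "Suc (Suc j)"] that False mk m_def by simp
      ultimately show False by blast
    qed
  qed
  have distinct: "distinct xs"
    unfolding distinct_conv_nth len
  proof (intro allI impI)
    fix i j assume "i < k + 1" "j < k + 1" "i \<noteq> j"
    then show "xs!i \<noteq> xs!j" using dist[of i j] dist[of j i] xs_nth[of i] xs_nth[of j]
      by (cases "i < j") auto
  qed
  have pew: "ew n E e f p" by (rule p)
  have JXp: "?J \<subseteq> ?X \<union> set p" by (rule J_sub[OF cc conn_from_walk[OF G e f pew]])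
  have JXxs: "?J \<subseteq> ?X \<union> set xs" using JXp setp p0 pl' by auto
  have xsJ: "p!Suc i \<in> ?J" if ik: "i \<le> k" for i
  proof (rule ccontr)
    assume notin: "p!Suc i \<notin> ?J"
    let ?R = "adj_in E (?X \<union> set xs - {p!Suc i})"
    have sub: "adj_in E ?J \<subseteq> ?R" using JXxs notin unfolding adj_in_def by blast
    have "connected_in E ?J (p!0) (p!(k+2))" using Jcon XJ p0 pl' unfolding induced_connected_def by blast
    then have "(p!0, p!(k+2)) \<in> (adj_in E ?J)\<^sup>*" by (simp add: connected_in_def)
    then have conn: "(p!0, p!(k+2)) \<in> ?R\<^sup>*" using rtrancl_mono[OF sub] by blast
    define L where "L = ends e \<union> {p!Suc j | j. j < i}"
    have "z \<in> L" if "(p!0, z) \<in> ?R\<^sup>*" for z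
      using that
    proof (induction rule: rtrancl_induct)
      case base then show ?case using p0 L_def by simp
    next
      case (step y z)
      have yz: "adj E y z" and zS: "z \<in> ?X \<union> set xs" "z \<noteq> p!Suc i" using step(2) by (auto simp: adj_in_def)
      have yL: "y \<in> ends e \<or> (\<exists>j<i. y = p!Suc j)" using step(3) L_def by auto
      consider "z \<in> ends e" | "z \<in> ends f" | l where "l \<le> k" "z = p!Suc l" using zS setxs by auto
      then show ?case
      proof cases
        case 1 then show ?thesis using L_def by simp
      next
        case 2
        then show ?thesis
        proof (cases "y \<in> ends e")
          case True then show ?thesis using nc 2 yz by blast
        next
          case False
          then obtain j where j: "j < i" "y = p!Suc j" using yL by blast
          have "\<not> adj E (p!Suc j) z" using L3[OF 2, of "Suc j"] j ik mk m_def by simp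
          then show ?thesis using yz j by simp
        qed
      next
        case 3
        have li: "l \<noteq> i" using 3 zS by auto
        show ?thesis
        proof (cases "y \<in> ends e")
          case True
          have "\<not> adj E y (p!Suc l)" if "1 \<le> l" using L2[OF True, of "Suc l"] that 3 mk m_def by simp
          then have "l = 0" using yz 3 by (cases l) auto
          then show ?thesis using li 3 L_def by auto
        next
          case False
          then obtain j where j: "j < i" "y = p!Suc j" using yL by blast
          have a1: "\<not> (Suc (Suc j) < Suc l)" using L1[of "Suc j" "Suc l"] yz j 3 mk m_def by auto
          have a2: "\<not> (Suc (Suc l) < Suc j)" using L1[of "Suc l" "Suc j"] yz j 3 ik mk m_def adj_sym by auto
          have "l < i" using a1 j li by linarith
          then show ?thesis using 3 L_def by auto
        qed
      qed
    qed
    then have "p!(k+2) \<in> L" using conn by blast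
    then show False
    proof (unfold L_def, elim UnE)
      assume "p!(k+2) \<in> ends e" then show False using pl' disj by blast
    next
      assume "p!(k+2) \<in> {p!Suc j | j. j < i}"
      then obtain j where "j < i" "p!(k+2) = p!Suc j" by blast
      then show False using xf[of j] pl' ik by auto
    qed
  qed
  have Jeq: "?J = ?X \<union> set xs" using JXxs XJ xsJ setxs by auto
  have sep: "\<not> connected_in E ({1..n} - {p!Suc i}) a b" if ik: "i \<le> k" and a: "a \<in> ends e" and b: "b \<in> ends f" for i a b
  proof
    assume "connected_in E ({1..n} - {p!Suc i}) a b"
    from reach_walk_in[OF this] obtain q where q: "q \<noteq> []" "hd q = a" "last q = b" "set q \<subseteq> {1..n} - {p!Suc i}" "walkE E q" by blast
    have "ew n E e f q" unfolding ew_iff using q a b by auto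
    from J_sub[OF cc conn_from_walk[OF G e f this]] have "?J \<subseteq> ?X \<union> set q" .
    then show False using xsJ[OF ik] xe[OF ik] xf[OF ik] q(4) by auto
  qed
  have pS: "set p \<subseteq> {1..n}" by (rule p_props(4))
  have cut: "cut_vertex n E (p!Suc i)" if ik: "i \<le> k" for i
    unfolding cut_vertex_def
  proof (intro conjI exI)
    have "Suc i < length p" using ik mk m_def by simp
    then show "p!Suc i \<in> {1..n}" using pS nth_mem[of "Suc i" p] by blast
    show "p!0 \<noteq> p!Suc i" using xe[OF ik] p0 by auto
    show "p!(k+2) \<noteq> p!Suc i" using xf[OF ik] pl' by auto
    have l: "k+2 < length p" "0 < length p" using mk m_def by auto
    have "p!0 \<in> {1..n}" "p!(k+2) \<in> {1..n}" using pS nth_mem[OF l(1)] nth_mem[OF l(2)] by blast+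
    then show "connected_in E {1..n} (p!0) (p!(k+2))"
      unfolding connected_in_def using walk_conn[OF p_props(5) pS l(1)] by blast
    show "\<not> connected_in E ({1..n} - {p!Suc i}) (p!0) (p!(k+2))" by (rule sep[OF ik p0 pl'])
  qed
  define A where "A = {{u, p!1} | u. u \<in> ends e \<and> adj E u (p!1)}"
  define B where "B = {{u, p!Suc k} | u. u \<in> ends f \<and> adj E u (p!Suc k)}"
  have x0: "xs!0 = p!1" using xs_nth[of 0] by simp
  have xk: "xs!k = p!Suc k" using xs_nth[of k] by simp
  have ee: "ends e = {fst e, snd e}" "ends f = {fst f, snd f}" by (simp_all add: ends_def)
  have Ane: "A \<noteq> {}" using A_def p0 adjp[of 0] mk by auto
  have Bne: "B \<noteq> {}" using B_def pl' adjp[of "Suc k"] mk adj_sym by fastforce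
  have Asub: "A \<subseteq> {{fst e, xs!0}, {snd e, xs!0}}" using A_def x0 ee by auto
  have Bsub: "B \<subseteq> {{fst f, xs!k}, {snd f, xs!k}}" using B_def xk ee by auto
  have Pth: "{{xs ! i, xs ! (i + 1)} | i. i < k} = {{p!Suc i, p!Suc (Suc i)} | i. i < k}"
    using xs_nth by (auto; metis Suc_leI Suc_eq_plus1 less_imp_le)
  let ?RHS = "{{fst e, snd e}, {fst f, snd f}} \<union> {{p!Suc i, p!Suc (Suc i)} | i. i < k} \<union> A \<union> B"
  have Xin: "x \<in> ?X \<or> (\<exists>i\<le>k. x = p!Suc i)" if "x \<in> ?J" for x using that Jeq setxs by auto
  have edge: "{a, b} \<in> ?RHS" if ab: "adj E a b" "a \<in> ?J" "b \<in> ?J" for a b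
  proof -
    have anb: "a \<noteq> b" using ab irr by auto
    consider "a \<in> ends e" | "a \<in> ends f" | i where "i \<le> k" "a = p!Suc i" using Xin[OF ab(2)] by auto
    then show ?thesis
    proof cases
      case 1
      consider "b \<in> ends e" | "b \<in> ends f" | j where "j \<le> k" "b = p!Suc j" using Xin[OF ab(3)] by auto
      then show ?thesis
      proof cases
        case 1 then show ?thesis using \<open>a \<in> ends e\<close> anb ee by auto
      next
        case 2 then show ?thesis using \<open>a \<in> ends e\<close> nc ab by blast
      next
        case 3
        have "\<not> adj E a (p!Suc j)" if "1 \<le> j" using L2[OF \<open>a \<in> ends e\<close>, of "Suc j"] that 3 mk m_def by simp
        then have "j = 0" using ab 3 by (cases j) auto
        then show ?thesis using 3 \<open>a \<in> ends e\<close> ab A_def by auto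
      qed
    next
      case 2
      consider "b \<in> ends e" | "b \<in> ends f" | j where "j \<le> k" "b = p!Suc j" using Xin[OF ab(3)] by auto
      then show ?thesis
      proof cases
        case 1 then show ?thesis using \<open>a \<in> ends f\<close> nc ab adj_sym by blast
      next
        case 2 then show ?thesis using \<open>a \<in> ends f\<close> anb ee by auto
      next
        case 3
        have "\<not> adj E (p!Suc j) a" if "j < k" using L3[OF \<open>a \<in> ends f\<close>, of "Suc j"] that 3 mk m_def by simp
        then have "j = k" using ab 3 adj_sym by fastforce
        then show ?thesis using 3 \<open>a \<in> ends f\<close> ab B_def by auto
      qed
    next
      case 3
      note ai = 3
      consider "b \<in> ends e" | "b \<in> ends f" | j where "j \<le> k" "b = p!Suc j" using Xin[OF ab(3)] by auto
      then show ?thesis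
      proof cases
        case 1
        have "\<not> adj E b (p!Suc i)" if "1 \<le> i" using L2[OF 1, of "Suc i"] that ai mk m_def by simp
        then have "i = 0" using ab ai adj_sym by (cases i) auto
        then have "{b, p!1} \<in> A" using 1 ab ai A_def adj_sym by auto
        then show ?thesis using ai \<open>i = 0\<close> by (simp add: insert_commute)
      next
        case 2
        have "\<not> adj E (p!Suc i) b" if "i < k" using L3[OF 2, of "Suc i"] that ai mk m_def by simp
        then have "i = k" using ab ai by fastforce
        then have "{b, p!Suc k} \<in> B" using 2 ab ai B_def adj_sym by auto
        then show ?thesis using ai \<open>i = k\<close> by (simp add: insert_commute)
      next
        case 3
        have a1: "\<not> (Suc (Suc i) < Suc j)" using L1[of "Suc i" "Suc j"] ab ai 3 mk m_def by auto
        have a2: "\<not> (Suc (Suc j) < Suc i)" using L1[of "Suc j" "Suc i"] ab ai 3 mk m_def adj_sym by auto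
        have "i \<noteq> j" using anb ai 3 by auto
        then consider "j = Suc i" | "i = Suc j" using a1 a2 by linarith
        then show ?thesis
        proof cases
          case 1 then have "i < k" using 3 by simp
          then show ?thesis using 1 ai 3 by blast
        next
          case 2 then have "j < k" using ai by simp
          then have "{p!Suc j, p!Suc (Suc j)} \<in> ?RHS" by blast
          then show ?thesis using 2 ai 3 by (simp add: insert_commute)
        qed
      qed
    qed
  qed
  have IE: "induced_edges E ?J = ?RHS"
  proof
    show "induced_edges E ?J \<subseteq> ?RHS"
      unfolding induced_edges_def using edge by (auto simp: adj_def)
  next
    have eJ: "fst e \<in> ?J" "snd e \<in> ?J" "fst f \<in> ?J" "snd f \<in> ?J" using XJ ee by auto
    have xJ: "p!Suc i \<in> ?J" if "i \<le> k" for i using xsJ that by blast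
    have mem: "{a, b} \<in> induced_edges E ?J" if "adj E a b" "a \<in> ?J" "b \<in> ?J" for a b
      using that unfolding induced_edges_def adj_def by (auto simp: insert_commute)
    show "?RHS \<subseteq> induced_edges E ?J"
    proof
      fix s assume s: "s \<in> ?RHS"
      have ea: "adj E (fst e) (snd e)" "adj E (fst f) (snd f)" using e f by (auto simp: adj_def)
      consider "s = {fst e, snd e}" | "s = {fst f, snd f}" | i where "i < k" "s = {p!Suc i, p!Suc (Suc i)}"
        | "s \<in> A" | "s \<in> B" using s by blast
      then show "s \<in> induced_edges E ?J"
      proof cases
        case 1 then show ?thesis using mem ea eJ by blast
      next
        case 2 then show ?thesis using mem ea eJ by blast
      next
        case 3 then show ?thesis using mem[of "p!Suc i" "p!Suc (Suc i)"] adjp[of "Suc i"] xJ[of i] xJ[of "Suc i"] mk by auto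
      next
        case 4 then obtain u where "u \<in> ends e" "adj E u (p!1)" "s = {u, p!1}" using A_def by blast
        then show ?thesis using mem[of u "p!1"] XJ xJ[of 0] by auto
      next
        case 5 then obtain u where "u \<in> ends f" "adj E u (p!Suc k)" "s = {u, p!Suc k}" using B_def by blast
        then show ?thesis using mem[of u "p!Suc k"] XJ xJ[of k] by auto
      qed
    qed
  qed
  show ?thesis
  proof (intro exI conjI)
    show "ends e = {fst e, snd e}" "ends f = {fst f, snd f}" by (rule ee(1), rule ee(2))
    show "length xs = k + 1" by (rule len)
    show "distinct xs" by (rule distinct)
    show "set xs \<inter> ?X = {}" by (rule xsX)
    show "?J = {fst e, snd e} \<union> set xs \<union> {snd f, fst f}" using Jeq ee by auto
    show "A \<noteq> {}" by (rule Ane)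
    show "A \<subseteq> {{fst e, xs!0}, {snd e, xs!0}}" by (rule Asub)
    show "B \<noteq> {}" by (rule Bne)
    show "B \<subseteq> {{fst f, xs!k}, {snd f, xs!k}}" by (rule Bsub)
    show "induced_edges E ?J = {{fst e, snd e}, {fst f, snd f}} \<union> {{xs ! i, xs ! (i + 1)} | i. i < k} \<union> A \<union> B"
      using IE Pth by simp
    show "\<forall>i\<le>k. cut_vertex n E (xs ! i) \<and> separates n E (xs ! i) e f"
    proof (intro allI impI conjI)
      fix i assume ik: "i \<le> k"
      show "cut_vertex n E (xs ! i)" using cut[OF ik] xs_nth[OF ik] by simp
      show "separates n E (xs ! i) e f" unfolding separates_def
        using sep[OF ik] xe[OF ik] xf[OF ik] xs_nth[OF ik] by auto
    qed
  qed
qed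

end


theorem lemma2p4:
  fixes n :: nat and E :: "(nat \<times> nat) set" and e f :: "nat \<times> nat"
  assumes G: "graph_on n E"
    and e: "e \<in> E" and f: "f \<in> E"
    and cr: "crossing e f"
    and cc: "crossing_closed n E e f"
  shows "((\<exists>a\<in>ends e. \<exists>b\<in>ends f. adj E a b) \<longrightarrow>
            J_set n E e f = ends e \<union> ends f)
       \<and> ((\<not> (\<exists>a\<in>ends e. \<exists>b\<in>ends f. adj E a b)) \<longrightarrow>
            (\<exists>v v' w w' (k::nat) xs A B.
               ends e = {v, v'} \<and> ends f = {w, w'} \<and>
               length xs = k + 1 \<and> distinct xs \<and>
               set xs \<inter> (ends e \<union> ends f) = {} \<and>
               J_set n E e f = {v, v'} \<union> set xs \<union> {w', w} \<and>
               A \<noteq> {} \<and> A \<subseteq> {{v, xs ! 0}, {v', xs ! 0}} \<and>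
               B \<noteq> {} \<and> B \<subseteq> {{w, xs ! k}, {w', xs ! k}} \<and>
               induced_edges E (J_set n E e f) =
                 {{v, v'}, {w, w'}} \<union> {{xs ! i, xs ! (i + 1)} | i. i < k} \<union> A \<union> B \<and>
               (\<forall>i\<le>k. cut_vertex n E (xs ! i) \<and> separates n E (xs ! i) e f)))"
proof -
  let ?J = "J_set n E e f"
  let ?X = "ends e \<union> ends f"
  have eS: "ends e \<subseteq> {1..n}" "ends f \<subseteq> {1..n}"
    using G e f by (auto simp: graph_on_def ends_def)
  have disj: "ends e \<inter> ends f = {}" using cr unfolding crossing_def ends_def by auto
  have Jmin: "minimal_conn n E e f ?J" by (rule J_min[OF cc])
  then have Jcc: "conn_containing n E e f ?J" by (simp add: minimal_conn_def)
  then have XJ: "?X \<subseteq> ?J" and JS: "?J \<subseteq> {1..n}" and Jcon: "induced_connected E ?J"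
    by (auto simp: conn_containing_def)
  show ?thesis
  proof (intro conjI impI)
    assume "\<exists>a\<in>ends e. \<exists>b\<in>ends f. adj E a b"
    then obtain a b where ab: "a \<in> ends e" "b \<in> ends f" "adj E a b" by blast
    have "ew n E e f [a, b]" unfolding ew_iff walkE_def using ab eS
      by (auto simp: less_Suc_eq)
    from conn_from_walk[OF G e f this] have "conn_containing n E e f (?X \<union> set [a,b])" .
    from J_sub[OF cc this] have "?J \<subseteq> ?X \<union> set [a,b]" .
    then show "?J = ?X" using XJ ab by auto
  next
    assume nc: "\<not> (\<exists>a\<in>ends e. \<exists>b\<in>ends f. adj E a b)"
    show "\<exists>v v' w w' (k::nat) xs A B.
               ends e = {v, v'} \<and> ends f = {w, w'} \<and>
               length xs = k + 1 \<and> distinct xs \<and>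
               set xs \<inter> (ends e \<union> ends f) = {} \<and>
               J_set n E e f = {v, v'} \<union> set xs \<union> {w', w} \<and>
               A \<noteq> {} \<and> A \<subseteq> {{v, xs ! 0}, {v', xs ! 0}} \<and>
               B \<noteq> {} \<and> B \<subseteq> {{w, xs ! k}, {w', xs ! k}} \<and>
               induced_edges E (J_set n E e f) =
                 {{v, v'}, {w, w'}} \<union> {{xs ! i, xs ! (i + 1)} | i. i < k} \<union> A \<union> B \<and>
               (\<forall>i\<le>k. cut_vertex n E (xs ! i) \<and> separates n E (xs ! i) e f)"
    proof -
      have fe: "fst e \<in> ?J" "fst f \<in> ?J" using XJ by (auto simp: ends_def)
      then have "connected_in E ?J (fst e) (fst f)" using Jcon unfolding induced_connected_def by blast
      from reach_walk_in[OF this] obtain q where q: "q \<noteq> []" "hd q = fst e" "last q = fst f" "set q \<subseteq> ?J" "walkE E q" by blast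
      have "ew n E e f q" unfolding ew_iff using q JS by (auto simp: ends_def)
      then obtain p where p: "ew n E e f p" and pmin: "\<And>q. ew n E e f q \<Longrightarrow> length p \<le> length q"
        using ex_has_least_nat[of "ew n E e f" q length] by blast
      show ?thesis by (rule part2[OF G e f p pmin cc nc disj])
    qed
  qed
qed

end
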